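(* Let $f:\mathbb{R}^n\to\mathbb{R}^n$ be continuous and let $\mu\ge0$. Suppose that for every $x\in\mathbb{R}^n$, $f$ admits a strict $\mu$-estimator $h_x$ at $x$ which is strongly regular around $x$, and that $$\sigma_f:=\inf_{x\in\mathbb{R}^n}\operatorname{lop}(h_x,x)>\mu.$$ Then $f$ is a bijection of $\mathbb{R}^n$ onto $\mathbb{R}^n$ and $f^{-1}$ is Lipschitz continuous on $\mathbb{R}^n$ with constant $(\sigma_f-\mu)^{-1}$.
   Context: $B^\circ(x,r)$ denotes the open ball. $\operatorname{lip}(g,\bar x)$ is the infimum of all $\ell>0$ such that $\|g(x_1)-g(x_2)\|\le\ell\|x_1-x_2\|$ on some neighbourhood of $\bar x$ ($+\infty$ if none). Given $\mu\ge0$, $h$ is a strict $\mu$-estimator of $f$ at $\bar x$ if $h(\bar x)=f(\bar x)$ and $\operatorname{lip}(f-h,\bar x)\le\mu$. $h$ is linearly open around $\bar x$ if there exist $\alpha>0$ and neighbourhoods $U$ of $\bar x$, $V$ of $h(\bar x)$ with $B^\circ(h(x),\alpha r)\cap V\subseteq h(B^\circ(x,r))$ for all $x\in U$, $r>0$; $\operatorname{lop}(h,\bar x)$ is the supremum of such $\alpha$ ($0$ if none). $h$ is strongly regular around $\bar x$ if it is linearly open around $\bar x$ and there exist neighbourhoods $U$ of $\bar x$ and $V$ of $h(\bar x)$ such that $h^{-1}(y)\cap U$ is a singleton for every $y\in V$. *)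

theory Defs
  imports "HOL-Analysis.Analysis"
begin

definition lip :: "('a::real_normed_vector \<Rightarrow> 'b::real_normed_vector) \<Rightarrow> 'a \<Rightarrow> ereal" where
  "lip g xbar = Inf (ereal ` {l. l > 0 \<and> (\<exists>U. open U \<and> xbar \<in> U \<and>
       (\<forall>x1\<in>U. \<forall>x2\<in>U. norm (g x1 - g x2) \<le> l * norm (x1 - x2)))})"

definition strict_estimator ::
  "real \<Rightarrow> ('a::real_normed_vector \<Rightarrow> 'b::real_normed_vector) \<Rightarrow> ('a \<Rightarrow> 'b) \<Rightarrow> 'a \<Rightarrow> bool" where
  "strict_estimator \<mu> h f xbar \<longleftrightarrow> h xbar = f xbar \<and> lip (\<lambda>x. f x - h x) xbar \<le> ereal \<mu>"

definition linearly_open_with ::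
  "('a::metric_space \<Rightarrow> 'b::metric_space) \<Rightarrow> 'a \<Rightarrow> real \<Rightarrow> bool" where
  "linearly_open_with h xbar \<alpha> \<longleftrightarrow> \<alpha> > 0 \<and> (\<exists>U V. open U \<and> xbar \<in> U \<and> open V \<and> h xbar \<in> V \<and>
       (\<forall>x\<in>U. \<forall>r>0. ball (h x) (\<alpha> * r) \<inter> V \<subseteq> h ` ball x r))"

definition linearly_open :: "('a::metric_space \<Rightarrow> 'b::metric_space) \<Rightarrow> 'a \<Rightarrow> bool" where
  "linearly_open h xbar \<longleftrightarrow> (\<exists>\<alpha>. linearly_open_with h xbar \<alpha>)"

definition lop :: "('a::metric_space \<Rightarrow> 'b::metric_space) \<Rightarrow> 'a \<Rightarrow> ereal" where
  "lop h xbar = Sup (insert 0 (ereal ` {\<alpha>. linearly_open_with h xbar \<alpha>}))"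

definition strongly_regular :: "('a::metric_space \<Rightarrow> 'b::metric_space) \<Rightarrow> 'a \<Rightarrow> bool" where
  "strongly_regular h xbar \<longleftrightarrow> linearly_open h xbar \<and>
     (\<exists>U V. open U \<and> xbar \<in> U \<and> open V \<and> h xbar \<in> V \<and>
        (\<forall>y\<in>V. \<exists>x. h -` {y} \<inter> U = {x}))"

end

theory Submission
  imports Defs
begin


lemma est_lip:
  fixes h f :: "'a::real_normed_vector \<Rightarrow> 'a"
  assumes est: "strict_estimator \<mu> h f x" and "\<mu> < \<mu>'"
  shows "\<exists>l Ue. 0 < l \<and> l < \<mu>' \<and> open Ue \<and> x \<in> Ue \<and>
    (\<forall>x1\<in>Ue. \<forall>x2\<in>Ue. norm ((f x1 - h x1) - (f x2 - h x2)) \<le> l * norm (x1 - x2))"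
proof -
  define P where "P l \<longleftrightarrow> l > 0 \<and> (\<exists>U. open U \<and> x \<in> U \<and>
       (\<forall>x1\<in>U. \<forall>x2\<in>U. norm ((f x1 - h x1) - (f x2 - h x2)) \<le> l * norm (x1 - x2)))" for l :: real
  have le: "lip (\<lambda>x. f x - h x) x \<le> ereal \<mu>" using est unfolding strict_estimator_def by blast
  have "ereal \<mu> < ereal \<mu>'" using assms(2) by simp
  with le have "lip (\<lambda>x. f x - h x) x < ereal \<mu>'" by (rule le_less_trans)
  hence "Inf (ereal ` {l. P l}) < ereal \<mu>'" unfolding lip_def P_def .
  hence "\<exists>y\<in>ereal ` {l. P l}. y < ereal \<mu>'" by (rule Inf_less_iff[THEN iffD1])
  then obtain l where l: "P l" "ereal l < ereal \<mu>'" by blast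
  from l(1) obtain U where U: "l > 0" "open U" "x \<in> U"
    "\<forall>x1\<in>U. \<forall>x2\<in>U. norm ((f x1 - h x1) - (f x2 - h x2)) \<le> l * norm (x1 - x2)"
    unfolding P_def by blast
  have "l < \<mu>'" using l(2) by simp
  then show ?thesis using U by blast
qed

lemma descent:
  fixes h f :: "'a::real_normed_vector \<Rightarrow> 'a"
  assumes est: "strict_estimator \<mu> h f x" and lo: "linearly_open_with h x \<alpha>"
    and mu: "\<mu> < \<mu>'" "0 \<le> \<mu>'" and c: "0 < c" "c + \<mu>' < \<alpha>" and fw: "f x \<noteq> w"
  shows "\<exists>z. norm (f z - w) + c * dist z x < norm (f x - w)"
proof -
  obtain l Ue where l: "0 < l" "l < \<mu>'" "open Ue" "x \<in> Ue"
    "\<forall>x1\<in>Ue. \<forall>x2\<in>Ue. norm ((f x1 - h x1) - (f x2 - h x2)) \<le> l * norm (x1 - x2)"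
    using est_lip[OF est mu(1)] by blast
  have hx: "h x = f x" using est unfolding strict_estimator_def by simp
  have "\<exists>U V. open U \<and> x \<in> U \<and> open V \<and> h x \<in> V \<and>
       (\<forall>x\<in>U. \<forall>r>0. ball (h x) (\<alpha> * r) \<inter> V \<subseteq> h ` ball x r)"
    using lo unfolding linearly_open_with_def by (rule conjunct2)
  then obtain U1 V1 where U: "open U1" "x \<in> U1" "open V1" "h x \<in> V1"
    "\<forall>u\<in>U1. \<forall>r>0. ball (h u) (\<alpha> * r) \<inter> V1 \<subseteq> h ` ball u r"
    by (elim exE conjE) (rule that)
  define d where "d = norm (f x - w)"
  have d: "d > 0" using fw unfolding d_def by simp
  define a' where "a' = (c + \<mu>' + \<alpha>) / 2"
  have a': "c + \<mu>' < a'" "a' < \<alpha>" "0 < a'" using c mu unfolding a'_def by auto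
  obtain r0 where r0: "r0 > 0" "ball x r0 \<subseteq> Ue" using l openE by blast
  obtain e1 where e1: "e1 > 0" "ball (h x) e1 \<subseteq> V1" using U openE by blast
  define r where "r = min r0 (min (e1 / (2*a')) (d / (2*a')))"
  have r: "r > 0" "r \<le> r0" "a' * r < e1" "a' * r < d"
    using r0 e1 d a' unfolding r_def by (auto simp: field_simps min_def)
  define u where "u = (1/d) *\<^sub>R (w - f x)"
  have nu: "norm u = 1" using d unfolding u_def d_def by (simp add: norm_minus_commute)
  define t where "t = h x + (a' * r) *\<^sub>R u"
  have "t \<in> ball (h x) (\<alpha> * r) \<inter> V1"
  proof -
    have "dist (h x) t = a' * r" unfolding t_def dist_norm using nu a' r by simp
    then show ?thesis using a' r e1 by (auto simp: mult_strict_right_mono)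
  qed
  then obtain z where z: "z \<in> ball x r" "h z = t" using U(5)[rule_format, OF U(2) r(1)] by blast
  have zU: "z \<in> Ue" using z r0 r by auto
  have ez: "norm ((f z - h z) - (f x - h x)) \<le> l * norm (z - x)"
    using l(5)[rule_format, OF zU l(4)] .
  have eq: "f z - w = (1 - a' * r / d) *\<^sub>R (f x - w) + ((f z - h z) - (f x - h x))"
    using d unfolding z(2) t_def u_def hx
    by (simp add: algebra_simps scaleR_diff_right divide_inverse)
  have "norm (f z - w) \<le> norm ((1 - a' * r / d) *\<^sub>R (f x - w)) + norm ((f z - h z) - (f x - h x))"
    unfolding eq by (rule norm_triangle_ineq)
  with ez have "norm (f z - w) \<le> norm ((1 - a' * r / d) *\<^sub>R (f x - w)) + l * norm (z - x)"
    by linarith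
  also have "norm ((1 - a' * r / d) *\<^sub>R (f x - w)) = d - a' * r"
  proof -
    have k0: "0 \<le> 1 - a' * r / d" using r d by (simp add: field_simps)
    have "norm ((1 - a' * r / d) *\<^sub>R (f x - w)) = (1 - a' * r / d) * d"
      using k0 unfolding d_def by simp
    also have "\<dots> = d - a' * r" using d by (simp add: field_simps)
    finally show ?thesis .
  qed
  finally have 1: "norm (f z - w) \<le> d - a' * r + l * dist z x" by (simp add: dist_norm)
  have "dist z x < r" using z by (simp add: dist_commute)
  hence "(l + c) * dist z x \<le> (\<mu>' + c) * r" using l c
    by (intro mult_mono) auto
  moreover have "(\<mu>' + c) * r < a' * r" using a' r by (intro mult_strict_right_mono) auto
  moreover have "(l + c) * dist z x = l * dist z x + c * dist z x" by (rule distrib_right)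
  ultimately have "norm (f z - w) + c * dist z x < d" using 1 by linarith
  thus ?thesis unfolding d_def by blast
qed


lemma expansion:
  fixes h f :: "'a::real_normed_vector \<Rightarrow> 'a"
  assumes cont: "continuous_on UNIV f" and est: "strict_estimator \<mu> h f x"
    and lo: "linearly_open_with h x \<alpha>" and sr: "strongly_regular h x"
    and mu: "\<mu> < \<mu>'" and c: "c + \<mu>' \<le> \<alpha>"
  shows "\<exists>\<rho>>0. \<forall>y\<in>ball x \<rho>. \<forall>z\<in>ball x \<rho>. c * dist y z \<le> dist (f y) (f z)"
proof -
  obtain l Ue where l: "0 < l" "l < \<mu>'" "open Ue" "x \<in> Ue"
    "\<forall>x1\<in>Ue. \<forall>x2\<in>Ue. norm ((f x1 - h x1) - (f x2 - h x2)) \<le> l * norm (x1 - x2)"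
    using est_lip[OF est mu(1)] by blast
  have hx: "h x = f x" using est unfolding strict_estimator_def by simp
  have "\<exists>U V. open U \<and> x \<in> U \<and> open V \<and> h x \<in> V \<and>
       (\<forall>x\<in>U. \<forall>r>0. ball (h x) (\<alpha> * r) \<inter> V \<subseteq> h ` ball x r)"
    using lo unfolding linearly_open_with_def by (rule conjunct2)
  then obtain U1 V1 where U: "open U1" "x \<in> U1" "open V1" "h x \<in> V1"
    "\<forall>u\<in>U1. \<forall>r>0. ball (h u) (\<alpha> * r) \<inter> V1 \<subseteq> h ` ball u r"
    by (elim exE conjE) (rule that)
  have a: "\<alpha> > 0" using lo unfolding linearly_open_with_def by (rule conjunct1)
  obtain U2 V2 where U2: "open U2" "x \<in> U2" "open V2" "h x \<in> V2"
    "\<forall>y\<in>V2. \<exists>z. h -` {y} \<inter> U2 = {z}"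
  proof -
    have "\<exists>U V. open U \<and> x \<in> U \<and> open V \<and> h x \<in> V \<and>
        (\<forall>y\<in>V. \<exists>x. h -` {y} \<inter> U = {x})"
      using sr unfolding strongly_regular_def by (rule conjunct2)
    then show ?thesis by (elim exE conjE) (rule that)
  qed
  obtain e1 where e1: "e1 > 0" "ball (h x) e1 \<subseteq> V1 \<inter> V2"
    using U U2 openE[of "V1 \<inter> V2"] by blast
  obtain r0 where r0: "r0 > 0" "ball x r0 \<subseteq> U1 \<inter> U2 \<inter> Ue"
    using U U2 l openE[of "U1 \<inter> U2 \<inter> Ue"] by blast
  have "isCont f x" using cont by (simp add: continuous_on_eq_continuous_at)
  then obtain \<eta> where \<eta>: "\<eta> > 0" "\<And>y. dist y x < \<eta> \<Longrightarrow> dist (f y) (f x) < e1 / 2"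
    using e1 unfolding continuous_at_eps_delta by (meson half_gt_zero)
  define \<rho> where "\<rho> = min (r0 / 3) (min \<eta> (e1 / (2 * (l + 1))))"
  have \<rho>: "\<rho> > 0" "3 * \<rho> \<le> r0" "\<rho> \<le> \<eta>" "\<rho> * (l+1) \<le> e1 / 2"
  proof -
    have m: "\<rho> \<le> r0 / 3" "\<rho> \<le> \<eta>" "\<rho> \<le> e1 / (2 * (l + 1))" unfolding \<rho>_def
      by (rule min.cobounded1, rule min.coboundedI2[OF min.cobounded1], rule min.coboundedI2[OF min.cobounded2])
    have "\<rho> > 0" unfolding \<rho>_def using r0 \<eta> e1 l by auto
    moreover have "\<rho> * (2 * (l + 1)) \<le> e1" using m(3) l by (simp add: pos_le_divide_eq)
    ultimately show "\<rho> > 0" "3 * \<rho> \<le> r0" "\<rho> \<le> \<eta>" "\<rho> * (l+1) \<le> e1 / 2"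
      using m by (auto simp: algebra_simps)
  qed
  have inUe: "y \<in> Ue" "y \<in> U1" "y \<in> U2" if "dist x y < 3 * \<rho>" for y
    using that r0 \<rho> by auto
  have hV: "h y \<in> V1 \<inter> V2" if y: "y \<in> ball x \<rho>" for y
  proof -
    have A1: "norm ((f y - h y) - (f x - h x)) \<le> l * norm (y - x)"
      using l(5)[rule_format, OF inUe(1) l(4)] y \<rho> by auto
    have A2: "norm (y - x) < \<rho>" using y by (simp add: dist_norm norm_minus_commute)
    have A3: "dist (f y) (f x) < e1 / 2"
    proof (rule \<eta>(2))
      show "dist y x < \<eta>" using y \<rho> by (simp add: dist_commute)
    qed
    have "h y - h x = (f y - f x) - ((f y - h y) - (f x - h x))" by simp
    hence "norm (h y - h x) \<le> norm (f y - f x) + norm ((f y - h y) - (f x - h x))"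
      by (metis norm_triangle_ineq4)
    also have "\<dots> < e1 / 2 + l * \<rho>"
    proof -
      have "l * norm (y - x) \<le> l * \<rho>" using A2 l by (intro mult_left_mono) auto
      thus ?thesis using A1 A3 by (simp add: dist_norm)
    qed
    also have "\<dots> \<le> e1" using \<rho> l by (simp add: algebra_simps)
    finally have "norm (h y - h x) < e1" .
    thus ?thesis using e1 by (auto simp: dist_norm norm_minus_commute)
  qed
  have hexp: "\<alpha> * dist y z \<le> dist (h y) (h z)" if y: "y \<in> ball x \<rho>" and z: "z \<in> ball x \<rho>" for y z
  proof (rule ccontr)
    assume "\<not> ?thesis"
    hence lt: "dist (h y) (h z) < \<alpha> * dist y z" by simp
    have r: "dist y z > 0"
    proof (rule ccontr)
      assume "\<not> dist y z > 0" hence "dist y z = 0" by simp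
      thus False using lt by simp
    qed
    have yU1: "y \<in> U1" using inUe(2)[of y] y \<rho> by auto
    have "h z \<in> ball (h y) (\<alpha> * dist y z) \<inter> V1" using lt IntD1[OF hV[OF z]] by simp
    with U(5)[rule_format, OF yU1 r] have "h z \<in> h ` ball y (dist y z)" by (rule subsetD)
    then obtain z' where z': "z' \<in> ball y (dist y z)" "h z' = h z" by (metis imageE)
    have "dist x z' < 3 * \<rho>"
    proof -
      have t1: "dist x z' \<le> dist x y + dist y z'" by (rule dist_triangle)
      have t2: "dist y z \<le> dist x y + dist x z" using dist_triangle[of y z x] by (simp add: dist_commute)
      have t3: "dist x y < \<rho>" "dist x z < \<rho>" "dist y z' < dist y z" using y z z' by auto
      show ?thesis using t1 t2 t3 by linarith
    qed
    hence z'U: "z' \<in> U2" using inUe(3) by blast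
    have zU: "z \<in> U2" using inUe(3)[of z] z \<rho> by auto
    obtain z0 where "h -` {h z} \<inter> U2 = {z0}" using U2(5)[rule_format, OF IntD2[OF hV[OF z]]] by blast
    hence eq0: "h -` {h z} \<inter> U2 = {z0}" .
    have "z' \<in> h -` {h z} \<inter> U2" "z \<in> h -` {h z} \<inter> U2" using z'U zU z'(2) by simp_all
    hence "z' \<in> {z0}" "z \<in> {z0}" unfolding eq0 by simp_all
    hence "z' = z" by simp
    thus False using z' by simp
  qed
  show ?thesis
  proof (intro exI[of _ \<rho>] conjI ballI \<rho>(1))
    fix y z assume y: "y \<in> ball x \<rho>" and z: "z \<in> ball x \<rho>"
    have yz: "y \<in> Ue" "z \<in> Ue" using inUe(1) y z \<rho> by auto
    have e: "norm ((f y - h y) - (f z - h z)) \<le> l * dist y z"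
      using l(5)[rule_format, OF yz] by (simp add: dist_norm)
    have "h y - h z = (f y - f z) - ((f y - h y) - (f z - h z))" by simp
    hence "norm (h y - h z) \<le> norm (f y - f z) + norm ((f y - h y) - (f z - h z))"
      by (metis norm_triangle_ineq4)
    hence "dist (h y) (h z) \<le> dist (f y) (f z) + l * dist y z"
      using e by (simp add: dist_norm)
    hence "\<alpha> * dist y z \<le> dist (f y) (f z) + l * dist y z" using hexp[OF y z] by linarith
    moreover have "(c + l) * dist y z \<le> \<alpha> * dist y z" using c l by (intro mult_right_mono) auto
    ultimately show "c * dist y z \<le> dist (f y) (f z)" by (simp add: algebra_simps)
  qed
qed



lemma jump:
  fixes f :: "'a::euclidean_space \<Rightarrow> 'a"
  assumes cont: "continuous_on UNIV f" and c: "c > 0"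
    and desc: "\<And>x w. f x \<noteq> w \<Longrightarrow> \<exists>z. norm (f z - w) + c * dist z x < norm (f x - w)"
  shows "\<exists>z. f z = w \<and> c * dist z x0 \<le> dist (f x0) w"
proof -
  define \<psi> where "\<psi> z = norm (f z - w) + c * dist z x0" for z
  define S where "S = cball x0 (norm (f x0 - w) / c)"
  have cpsi: "continuous_on S \<psi>" unfolding \<psi>_def
    by (intro continuous_intros continuous_on_subset[OF cont]) auto
  have r0: "0 \<le> norm (f x0 - w) / c" using c by simp
  have x0S: "x0 \<in> S" unfolding S_def using r0 by simp
  have "compact S" "S \<noteq> {}" unfolding S_def using x0S S_def by auto
  then obtain z where z: "z \<in> S" "\<And>y. y \<in> S \<Longrightarrow> \<psi> z \<le> \<psi> y"
    using continuous_attains_inf[OF _ _ cpsi] by blast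
  have glob: "\<psi> z \<le> \<psi> y" for y
  proof (cases "y \<in> S")
    case True thus ?thesis using z by blast
  next
    case False
    hence "dist x0 y > norm (f x0 - w) / c" unfolding S_def by auto
    hence "c * dist y x0 > norm (f x0 - w)" using c by (simp add: field_simps dist_commute)
    moreover have "\<psi> x0 = norm (f x0 - w)" unfolding \<psi>_def by simp
    moreover have "\<psi> y \<ge> c * dist y x0" unfolding \<psi>_def by simp
    ultimately have "\<psi> y > \<psi> x0" by linarith
    with x0S show ?thesis using z by force
  qed
  have fz: "f z = w"
  proof (rule ccontr)
    assume "f z \<noteq> w"
    then obtain z' where z': "norm (f z' - w) + c * dist z' z < norm (f z - w)" using desc by blast
    have "\<psi> z' \<le> norm (f z' - w) + c * dist z' z + c * dist z x0"
      unfolding \<psi>_def using c dist_triangle[of z' x0 z]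
      by (simp add: algebra_simps) (metis distrib_left mult_left_mono less_imp_le)
    also have "\<dots> < \<psi> z" using z' unfolding \<psi>_def by simp
    finally show False using glob[of z'] by simp
  qed
  have "c * dist z x0 \<le> dist (f x0) w"
    using glob[of x0] fz unfolding \<psi>_def by (simp add: dist_norm)
  thus ?thesis using fz by blast
qed

lemma uniform_expansion:
  fixes f :: "'a::euclidean_space \<Rightarrow> 'a"
  assumes K: "compact K"
    and E: "\<And>x. \<exists>\<rho>>0. \<forall>y\<in>ball x \<rho>. \<forall>z\<in>ball x \<rho>. c * dist y z \<le> dist (f y) (f z)"
  obtains \<delta> where "\<delta> > 0" "\<And>y z. y \<in> K \<Longrightarrow> z \<in> K \<Longrightarrow> dist y z < \<delta> \<Longrightarrow> c * dist y z \<le> dist (f y) (f z)"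
proof -
  obtain \<rho> where \<rho>: "\<And>x. \<rho> x > 0 \<and> (\<forall>y\<in>ball x (\<rho> x). \<forall>z\<in>ball x (\<rho> x). c * dist y z \<le> dist (f y) (f z))"
    using E by metis
  have "K \<subseteq> \<Union> (range (\<lambda>x. ball x (\<rho> x)))" using \<rho> by (meson UNIV_I UN_I centre_in_ball subsetI)
  then obtain e where e: "e > 0" "\<And>y. y \<in> K \<Longrightarrow> \<exists>G \<in> range (\<lambda>x. ball x (\<rho> x)). ball y e \<subseteq> G"
    using Heine_Borel_lemma[OF K] by blast
  show ?thesis
  proof (rule that[OF e(1)])
    fix y z assume "y \<in> K" "z \<in> K" "dist y z < e"
    then obtain x where "ball y e \<subseteq> ball x (\<rho> x)" using e by blast
    moreover have "y \<in> ball y e" "z \<in> ball y e" using e \<open>dist y z < e\<close> by auto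
    ultimately show "c * dist y z \<le> dist (f y) (f z)" using \<rho>[of x] by blast
  qed
qed


lemma lin3: "(a::real) \<le> x \<Longrightarrow> b < y \<Longrightarrow> c \<le> x \<Longrightarrow> x \<le> z \<Longrightarrow> a + b + c < z + y + z"
  by linarith

primrec liftseq :: "('a \<Rightarrow> 'a \<Rightarrow> 'a) \<Rightarrow> (nat \<Rightarrow> 'a) \<Rightarrow> 'a \<Rightarrow> nat \<Rightarrow> 'a" where
  "liftseq J v x0 0 = x0"
| "liftseq J v x0 (Suc k) = J (liftseq J v x0 k) (v (Suc k))"

lemma inj_from:
  fixes f :: "'a::euclidean_space \<Rightarrow> 'a"
  assumes cont: "continuous_on UNIV f" and c: "c > 0"
    and J: "\<And>x w. \<exists>z. f z = w \<and> c * dist z x \<le> dist (f x) w"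
    and E: "\<And>x. \<exists>\<rho>>0. \<forall>y\<in>ball x \<rho>. \<forall>z\<in>ball x \<rho>. c * dist y z \<le> dist (f y) (f z)"
  shows "inj f"
proof (rule injI)
  fix a b assume ab: "f a = f b"
  define w where "w = f a"
  define \<sigma> where "\<sigma> t = a + t *\<^sub>R (b - a)" for t :: real
  have contfs: "continuous_on {0..1} (\<lambda>t. f (\<sigma> t))" unfolding \<sigma>_def
    by (intro continuous_on_compose2[OF cont] continuous_intros) auto
  have cd: "continuous_on {0..1} (\<lambda>t. dist (f (\<sigma> t)) w)"
    by (intro continuous_intros contfs)
  have "\<exists>t0\<in>{0..1}. \<forall>t\<in>{0..1}. dist (f (\<sigma> t)) w \<le> dist (f (\<sigma> t0)) w"
    by (rule continuous_attains_sup[OF _ _ cd]) auto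
  then obtain t0 where t0: "t0 \<in> {0..1}" "\<And>t. t \<in> {0..1} \<Longrightarrow> dist (f (\<sigma> t)) w \<le> dist (f (\<sigma> t0)) w"
    by blast
  define M where "M = dist (f (\<sigma> t0)) w"
  have M: "M \<ge> 0" "\<And>t. t \<in> {0..1} \<Longrightarrow> dist (f (\<sigma> t)) w \<le> M" using t0 unfolding M_def by auto
  define K where "K = cball a (norm (b - a) + M / c)"
  have cK: "compact K" unfolding K_def by simp
  obtain \<delta> where \<delta>: "\<delta> > 0" "\<And>y z. y \<in> K \<Longrightarrow> z \<in> K \<Longrightarrow> dist y z < \<delta> \<Longrightarrow> c * dist y z \<le> dist (f y) (f z)"
    using uniform_expansion[OF cK E] by blast
  have "uniformly_continuous_on {0..1} (\<lambda>t. f (\<sigma> t))"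
    using compact_uniformly_continuous[OF contfs] by simp
  moreover have "c * \<delta> / 4 > 0" using c \<delta> by simp
  ultimately obtain d where d: "d > 0" "\<And>t t'. t \<in> {0..1} \<Longrightarrow> t' \<in> {0..1} \<Longrightarrow> dist t' t < d \<Longrightarrow>
      dist (f (\<sigma> t')) (f (\<sigma> t)) < c * \<delta> / 4"
    unfolding uniformly_continuous_on_def by metis
  obtain N :: nat where N0: "1 / d + 4 * norm (b - a) / \<delta> + 8 * M / (c * \<delta>) + 1 < real N"
    using reals_Archimedean2 by blast
  have nn: "1 / d > 0" "4 * norm (b - a) / \<delta> \<ge> 0" "8 * M / (c * \<delta>) \<ge> 0"
    using d \<delta> c M by auto
  have Npos: "real N > 0" using N0 nn by linarith
  have Nd: "1 / real N < d"
  proof -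
    have "1 / d < real N" using N0 nn by linarith
    thus ?thesis using d Npos by (simp add: field_simps)
  qed
  have Nb: "norm (b - a) / real N < \<delta> / 4"
  proof -
    have "4 * norm (b - a) / \<delta> < real N" using N0 nn by linarith
    thus ?thesis using \<delta> Npos by (simp add: field_simps)
  qed
  have NM: "M / (real N * c) \<le> \<delta> / 8"
  proof -
    have "8 * M / (c * \<delta>) < real N" using N0 nn by linarith
    thus ?thesis using \<delta> Npos c by (simp add: field_simps)
  qed
  define J' where "J' x y = (SOME z. f z = y \<and> c * dist z x \<le> dist (f x) y)" for x y
  have J': "f (J' x y) = y \<and> c * dist (J' x y) x \<le> dist (f x) y" for x y
    unfolding J'_def using someI_ex[OF J] .
  define q where "q k = (real N - real k) / real N" for k :: nat
  define s where "s i = f (\<sigma> (real i / real N))" for i :: nat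
  define v where "v i k = w + q k *\<^sub>R (s i - w)" for i k
  define Z where "Z i = liftseq J' (v i) (\<sigma> (real i / real N))" for i
  have tI: "real i / real N \<in> {0..1}" if "i \<le> N" for i using that Npos by auto
  have sM: "dist (s i) w \<le> M" if "i \<le> N" for i unfolding s_def using M(2)[OF tI[OF that]] .
  have q0: "q 0 = 1" unfolding q_def using Npos by simp
  have qN: "q N = 0" unfolding q_def by simp
  have qd: "q k - q (Suc k) = 1 / real N" for k unfolding q_def using Npos by (simp add: field_simps)
  have qb: "0 \<le> q k \<and> q k \<le> 1" if "k \<le> N" for k unfolding q_def using that Npos by auto
  have P1: "f (Z i k) = v i k" for i k
  proof (induction k)
    case 0 show ?case unfolding Z_def v_def q0 s_def by simp
  next
    case (Suc k) show ?case unfolding Z_def using J' by simp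
  qed
  have step: "dist (Z i (Suc k)) (Z i k) \<le> M / (real N * c)" if "i \<le> N" for i k
  proof -
    have "c * dist (Z i (Suc k)) (Z i k) \<le> dist (v i k) (v i (Suc k))"
      using J'[of "Z i k" "v i (Suc k)"] P1[of i k] unfolding Z_def by simp
    also have "v i k - v i (Suc k) = (q k - q (Suc k)) *\<^sub>R (s i - w)"
      unfolding v_def by (simp add: algebra_simps)
    hence "dist (v i k) (v i (Suc k)) = dist (s i) w / real N"
      unfolding dist_norm qd using Npos by simp
    also have "\<dots> \<le> M / real N" using sM[OF that] Npos by (simp add: divide_right_mono)
    finally show ?thesis using c Npos by (simp add: field_simps)
  qed
  have P2: "dist (Z i k) (\<sigma> (real i / real N)) \<le> real k * (M / (real N * c))" if "i \<le> N" for i k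
  proof (induction k)
    case 0 show ?case unfolding Z_def by simp
  next
    case (Suc k)
    have "dist (Z i (Suc k)) (\<sigma> (real i / real N)) \<le> dist (Z i (Suc k)) (Z i k) + dist (Z i k) (\<sigma> (real i / real N))"
      by (rule dist_triangle)
    also have "\<dots> \<le> M / (real N * c) + real k * (M / (real N * c))" by (rule add_mono[OF step[OF that, of k] Suc])
    finally have "dist (Z i (Suc k)) (\<sigma> (real i / real N)) \<le> M / (real N * c) + real k * (M / (real N * c))" .
    moreover have "real (Suc k) * (M / (real N * c)) = M / (real N * c) + real k * (M / (real N * c))"
      by (simp add: distrib_right add_divide_distrib)
    ultimately show ?case by linarith
  qed
  have dsig: "dist a (\<sigma> t) = t * norm (b - a)" if "t \<ge> 0" for t
    unfolding \<sigma>_def dist_norm using that by simp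
  have inK: "Z i k \<in> K" if "i \<le> N" "k \<le> N" for i k
  proof -
    have A: "dist a (Z i k) \<le> dist a (\<sigma> (real i / real N)) + dist (Z i k) (\<sigma> (real i / real N))"
      by (metis dist_commute dist_triangle)
    have B: "dist a (\<sigma> (real i / real N)) = (real i / real N) * norm (b - a)"
      using dsig[of "real i / real N"] by simp
    have C: "(real i / real N) * norm (b - a) \<le> norm (b - a)"
      using that Npos by (intro mult_left_le_one_le) auto
    have D: "real k * (M / (real N * c)) = (real k / real N) * (M / c)" by simp
    have E: "(real k / real N) * (M / c) \<le> M / c" using that Npos M c by (intro mult_left_le_one_le) auto
    have "dist a (Z i k) \<le> norm (b - a) + M / c" using A B C D E P2[OF that(1), of k] by linarith
    thus ?thesis unfolding K_def by simp
  qed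
  have P3: "dist (Z i k) (Z (Suc i) k) < \<delta> / 4" if "i < N" "k \<le> N" for i k
    using that(2)
  proof (induction k)
    case 0
    have "\<sigma> (real i / real N) - \<sigma> (real (Suc i) / real N) = (- 1 / real N) *\<^sub>R (b - a)"
      unfolding \<sigma>_def using Npos by (simp add: algebra_simps add_divide_distrib scaleR_add_left)
    hence "dist (Z i 0) (Z (Suc i) 0) = norm (b - a) / real N"
      unfolding Z_def dist_norm using Npos by simp
    then show ?case using Nb by simp
  next
    case (Suc k)
    have iN: "i \<le> N" "Suc i \<le> N" using that by auto
    have "dist (Z i (Suc k)) (Z (Suc i) (Suc k)) \<le>
        dist (Z i (Suc k)) (Z i k) + dist (Z i k) (Z (Suc i) k) + dist (Z (Suc i) k) (Z (Suc i) (Suc k))"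
      using dist_triangle[of "Z i (Suc k)" "Z (Suc i) (Suc k)" "Z i k"]
        dist_triangle[of "Z i k" "Z (Suc i) (Suc k)" "Z (Suc i) k"] by linarith
    also have "\<dots> < \<delta> / 8 + \<delta> / 4 + \<delta> / 8"
    proof -
      have ih: "dist (Z i k) (Z (Suc i) k) < \<delta> / 4" using Suc by simp
      have s2: "dist (Z (Suc i) k) (Z (Suc i) (Suc k)) \<le> M / (real N * c)"
        using step[OF iN(2), of k] by (simp add: dist_commute)
      show ?thesis by (rule lin3[OF step[OF iN(1), of k] ih s2 NM])
    qed
    finally have D: "dist (Z i (Suc k)) (Z (Suc i) (Suc k)) < \<delta>" using \<delta> by simp
    have "c * dist (Z i (Suc k)) (Z (Suc i) (Suc k)) \<le> dist (v i (Suc k)) (v (Suc i) (Suc k))"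
      using \<delta>(2)[OF inK[OF iN(1) Suc(2)] inK[OF iN(2) Suc(2)] D] P1 by simp
    also have "v i (Suc k) - v (Suc i) (Suc k) = q (Suc k) *\<^sub>R (s i - s (Suc i))"
      unfolding v_def by (simp add: algebra_simps)
    hence "dist (v i (Suc k)) (v (Suc i) (Suc k)) = q (Suc k) * dist (s i) (s (Suc i))"
      unfolding dist_norm using qb[OF Suc(2)] by simp
    also have "\<dots> \<le> dist (s i) (s (Suc i))"
      using qb[OF Suc(2)] by (intro mult_left_le_one_le) auto
    also have "\<dots> < c * \<delta> / 4"
    proof -
      have "dist (real (Suc i) / real N) (real i / real N) < d"
        using Nd Npos by (simp add: dist_real_def diff_divide_distrib[symmetric])
      thus ?thesis unfolding s_def using d(2)[OF tI[OF iN(1)] tI[OF iN(2)]] by (simp add: dist_commute)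
    qed
    finally show ?case using c by (simp add: field_simps)
  qed
  have vN: "v i N = w" for i unfolding v_def qN by simp
  have eqN: "Z i N = Z (Suc i) N" if "i < N" for i
  proof -
    have D: "dist (Z i N) (Z (Suc i) N) < \<delta>" using P3[OF that order_refl] \<delta> by simp
    have "c * dist (Z i N) (Z (Suc i) N) \<le> 0"
      using \<delta>(2)[OF inK inK D] that P1 vN by simp
    thus ?thesis using c by (simp add: mult_le_0_iff)
  qed
  have Zall: "Z 0 N = Z i N" if "i \<le> N" for i
    using that by (induction i) (auto simp: eqN)
  have fix_pt: "J' x w = x" if "f x = w" for x
  proof -
    have "c * dist (J' x w) x \<le> 0" using J'[of x w] that by simp
    thus ?thesis using c by (simp add: mult_le_0_iff)
  qed
  have Za: "Z 0 k = a" for k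
  proof (induction k)
    case 0 show ?case unfolding Z_def \<sigma>_def by simp
  next
    case (Suc k)
    have "v 0 (Suc k) = w" unfolding v_def s_def \<sigma>_def w_def by simp
    thus ?case using Suc fix_pt[of a] unfolding Z_def w_def by simp
  qed
  have Zb: "Z N k = b" for k
  proof (induction k)
    case 0 show ?case unfolding Z_def \<sigma>_def using Npos by simp
  next
    case (Suc k)
    have "v N (Suc k) = w" unfolding v_def s_def \<sigma>_def w_def using Npos ab by simp
    thus ?case using Suc fix_pt[of b] ab unfolding Z_def w_def by simp
  qed
  show "a = b" using Zall[of N] Za Zb by simp
qed


lemma zero_ne_one_vec: "(0::real^'n) \<noteq> 1"
  by (simp add: vec_eq_iff)

theorem mainTheorem5:
  fixes f :: "real ^ 'n \<Rightarrow> real ^ 'n"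
    and h :: "real ^ 'n \<Rightarrow> real ^ 'n \<Rightarrow> real ^ 'n"
    and \<mu> :: real
  assumes "continuous_on UNIV f"
    and "\<mu> \<ge> 0"
    and "\<And>x. strict_estimator \<mu> (h x) f x"
    and "\<And>x. strongly_regular (h x) x"
    and "(INF x. lop (h x) x) > ereal \<mu>"
  shows "bij f \<and>
    (1 / (real_of_ereal (INF x. lop (h x) x) - \<mu>))-lipschitz_on UNIV (inv f)"
proof -
  note cont = assms(1) and mu0 = assms(2) and est = assms(3) and sr = assms(4)
  define \<sigma> where "\<sigma> = (INF x. lop (h x) x)"
  have key: "bij f \<and> (\<forall>y1 y2. c * dist (inv f y1) (inv f y2) \<le> dist y1 y2)"
    if c: "0 < c" "ereal (c + \<mu>) < \<sigma>" for c
  proof -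
    obtain s where s: "ereal (c + \<mu>) < ereal s" "ereal s < \<sigma>" using ereal_dense2[OF c(2)] by blast
    define \<mu>' where "\<mu>' = s - c"
    have mu': "\<mu> < \<mu>'" "0 \<le> \<mu>'" using s mu0 unfolding \<mu>'_def by auto
    have al: "\<exists>\<alpha>. linearly_open_with (h x) x \<alpha> \<and> c + \<mu>' < \<alpha>" for x
    proof -
      have "\<sigma> \<le> lop (h x) x" unfolding \<sigma>_def by (rule INF_lower) simp
      hence "ereal (c + \<mu>') < Sup (insert 0 (ereal ` {\<alpha>. linearly_open_with (h x) x \<alpha>}))"
        using s unfolding \<mu>'_def lop_def by simp
      then obtain y where y: "y \<in> insert 0 (ereal ` {\<alpha>. linearly_open_with (h x) x \<alpha>})" "ereal (c + \<mu>') < y"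
        unfolding less_Sup_iff by blast
      have "y \<noteq> 0" using y(2) c mu' by (auto simp: zero_ereal_def)
      then obtain \<alpha> where "y = ereal \<alpha>" "linearly_open_with (h x) x \<alpha>" using y(1) by auto
      thus ?thesis using y(2) by auto
    qed
    have desc: "\<exists>z. norm (f z - w) + c * dist z x < norm (f x - w)" if "f x \<noteq> w" for x w
    proof -
      obtain \<alpha> where "linearly_open_with (h x) x \<alpha>" "c + \<mu>' < \<alpha>" using al by blast
      thus ?thesis using descent[OF est _ mu' c(1) _ that] by blast
    qed
    have E: "\<exists>\<rho>>0. \<forall>y\<in>ball x \<rho>. \<forall>z\<in>ball x \<rho>. c * dist y z \<le> dist (f y) (f z)" for x
    proof -
      obtain \<alpha> where "linearly_open_with (h x) x \<alpha>" "c + \<mu>' < \<alpha>" using al by blast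
      thus ?thesis using expansion[OF cont est _ sr mu'(1)] by fastforce
    qed
    have J: "\<exists>z. f z = w \<and> c * dist z x \<le> dist (f x) w" for x w
      using jump[OF cont c(1) desc] by blast
    have inj: "inj f" using inj_from[OF cont c(1) J E] .
    have surj: "surj f"
    proof -
      have "\<forall>y. \<exists>x. y = f x" using J by metis
      thus ?thesis by (simp add: surj_def)
    qed
    have "c * dist (inv f y1) (inv f y2) \<le> dist y1 y2" for y1 y2
    proof -
      obtain z where z: "f z = y2" "c * dist z (inv f y1) \<le> dist (f (inv f y1)) y2" using J by blast
      have "inv f y2 = z" using z(1) inv_f_f[OF inj] by blast
      thus ?thesis using z(2) surj_f_inv_f[OF surj] by (simp add: dist_commute)
    qed
    thus ?thesis using inj surj by (simp add: bij_def)
  qed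
  have smu: "\<sigma> > ereal \<mu>" using assms(5) unfolding \<sigma>_def .
  show ?thesis
  proof (cases "\<sigma> = \<infinity>")
    case True
    have b: "bij f" using key[of 1] True by simp
    have "inv f 0 \<noteq> inv f 1"
      using bij_imp_bij_inv[OF b] zero_ne_one_vec unfolding bij_def inj_def by blast
    hence D: "dist (inv f 0) (inv f (1::real^'n)) > 0" by simp
    define c where "c = 2 * dist (0::real^'n) 1 / dist (inv f 0) (inv f (1::real^'n))"
    have "c > 0" unfolding c_def using D zero_ne_one_vec by simp
    hence kk: "\<forall>y1 y2. c * dist (inv f y1) (inv f y2) \<le> dist y1 y2" using key[of c] True by simp
    hence "c * dist (inv f 0) (inv f (1::real^'n)) \<le> dist (0::real^'n) 1" by blast
    moreover have "c * dist (inv f 0) (inv f (1::real^'n)) = 2 * dist (0::real^'n) 1"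
      unfolding c_def using D by simp
    ultimately show ?thesis using zero_ne_one_vec by simp
  next
    case False
    then obtain S where S: "\<sigma> = ereal S" using smu by (cases \<sigma>) auto
    have SM: "S > \<mu>" using smu S by simp
    define C where "C = S - \<mu>"
    have C: "C > 0" using SM unfolding C_def by simp
    have k: "bij f \<and> (\<forall>y1 y2. c * dist (inv f y1) (inv f y2) \<le> dist y1 y2)" if "0 < c" "c < C" for c
      using key[of c] that S unfolding C_def by simp
    have b: "bij f" using k[of "C/2"] C by simp
    have lip: "dist (inv f y1) (inv f y2) \<le> 1 / C * dist y1 y2" for y1 y2
    proof (rule ccontr)
      define D where "D = dist (inv f y1) (inv f y2)"
      define E where "E = dist y1 y2"
      assume "\<not> dist (inv f y1) (inv f y2) \<le> 1 / C * dist y1 y2"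
      hence lt: "E < C * D" unfolding D_def E_def using C by (simp add: field_simps)
      have E0: "E \<ge> 0" unfolding E_def by simp
      hence "C * D > 0" using lt by linarith
      hence D0: "D > 0" using C by (simp add: zero_less_mult_iff)
      have ED: "E / D < C" using lt D0 by (simp add: field_simps)
      define c where "c = (C + E / D) / 2"
      have ED0: "E / D \<ge> 0" using E0 D0 by simp
      have p1: "0 < C + E / D" using C ED0 by (rule add_pos_nonneg)
      have p2: "C + E / D < C + C" using ED by simp
      have "0 < c" unfolding c_def using p1 by simp
      moreover have "c < C" unfolding c_def using p2 by simp
      ultimately have "c * D \<le> E" using k unfolding D_def E_def by blast
      moreover have "c * D = (C * D + E) / 2" unfolding c_def using D0 by (simp add: field_simps)
      ultimately show False using lt by simp
    qed
    have "real_of_ereal (INF x. lop (h x) x) - \<mu> = C" using S unfolding \<sigma>_def C_def by simp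
    thus ?thesis using b lip C unfolding lipschitz_on_def by simp
  qed
qed

end
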